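(* For $k=2$, $\Theta_2$ equals the support of $\nu_2$.
   Context: Take $k=2$. For a permutation $\tau$ of $\{0,1,2\}$ and $c=(c_1,c_2)\in(0,\infty)^2$: $E_{\tau,i}=\{j\in\{1,2\}:\min(\tau(j-1),\tau(j))<i\le\max(\tau(j-1),\tau(j))\}$, $F_{\tau,i}(c)=\sum_{j\in E_{\tau,i}}\sqrt{2c_j}$, $F_\tau=(F_{\tau,1},F_{\tau,2})$, $w_\tau(c)=\frac14\prod_{i=1}^2\sqrt{2c_i}/F_{\tau,i}(c)$. Explicitly, writing $s_i=\sqrt{2c_i}$: $F_{(0,1,2)}=(s_1,s_2)$, $w=1/4$; $F_{(0,2,1)}=(s_1,s_1+s_2)$, $w=\frac14 s_2/(s_1+s_2)$; $F_{(1,0,2)}=(s_1+s_2,s_2)$, $w=\frac14 s_1/(s_1+s_2)$; $F_{(1,2,0)}=(s_2,s_1+s_2)$, $w=\frac14 s_1/(s_1+s_2)$; $F_{(2,0,1)}=(s_1+s_2,s_1)$, $w=\frac14 s_2/(s_1+s_2)$; $F_{(2,1,0)}=(s_2,s_1)$, $w=1/4$ (here $\tau$ is written as $(\tau(0),\tau(1),\tau(2))$). $Q$ is the Markov kernel $Q(c,\cdot)=\sum_\tau w_\tau(c)\delta_{F_\tau(c)}$. For any probability $\nu^{(0)}$ supported in $[2,8]^2$, $\nu^{(0)}Q^n$ converges weakly to a probability $\nu_2$ independent of $\nu^{(0)}$. Let $\Theta^{(0)}=[2,8]^2$, $\Theta^{(n)}=\bigcup_\tau F_\tau(\Theta^{(n-1)})$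 (a nonincreasing sequence of nonempty compact sets), and $\Theta_2=\bigcap_n\Theta^{(n)}$. *)

theory Defs
  imports "HOL-Probability.Probability"
begin

definition coord :: "real \<times> real \<Rightarrow> nat \<Rightarrow> real" where
  "coord c j = (if j = 1 then fst c else snd c)"

definition perms3 :: "(nat \<Rightarrow> nat) set" where
  "perms3 = {\<tau>. \<tau> permutes {0,1,2}}"

definition E_set :: "(nat \<Rightarrow> nat) \<Rightarrow> nat \<Rightarrow> nat set" where
  "E_set \<tau> i = {j \<in> {1,2}. min (\<tau> (j-1)) (\<tau> j) < i \<and> i \<le> max (\<tau> (j-1)) (\<tau> j)}"

definition F_comp :: "(nat \<Rightarrow> nat) \<Rightarrow> nat \<Rightarrow> real \<times> real \<Rightarrow> real" where
  "F_comp \<tau> i c = (\<Sum>j\<in>E_set \<tau> i. sqrt (2 * coord c j))"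

definition F_map :: "(nat \<Rightarrow> nat) \<Rightarrow> real \<times> real \<Rightarrow> real \<times> real" where
  "F_map \<tau> c = (F_comp \<tau> 1 c, F_comp \<tau> 2 c)"

definition w_weight :: "(nat \<Rightarrow> nat) \<Rightarrow> real \<times> real \<Rightarrow> real" where
  "w_weight \<tau> c = 1/4 * (\<Prod>i\<in>{1,2}. sqrt (2 * coord c i) / F_comp \<tau> i c)"

text \<open>The action nu \<mapsto> nu Q of the Markov kernel
  Q(c,.) = sum_tau w_tau(c) delta_{F_tau(c)} on Borel measures on R^2.\<close>
definition Qstep :: "(real \<times> real) measure \<Rightarrow> (real \<times> real) measure" where
  "Qstep \<nu> = measure_of UNIV (sets borel)
     (\<lambda>A. \<integral>\<^sup>+ c. (\<Sum>\<tau>\<in>perms3. ennreal (w_weight \<tau> c) * indicator A (F_map \<tau> c)) \<partial>\<nu>)"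

definition weak_conv2 :: "(nat \<Rightarrow> (real \<times> real) measure) \<Rightarrow> (real \<times> real) measure \<Rightarrow> bool" where
  "weak_conv2 \<mu>s \<mu> \<longleftrightarrow>
     (\<forall>f :: real \<times> real \<Rightarrow> real. continuous_on UNIV f \<and> bounded (range f) \<longrightarrow>
        (\<lambda>n. \<integral>x. f x \<partial>(\<mu>s n)) \<longlonglongrightarrow> (\<integral>x. f x \<partial>\<mu>))"

definition msupport :: "(real \<times> real) measure \<Rightarrow> (real \<times> real) set" where
  "msupport \<mu> = {x. \<forall>U. open U \<and> x \<in> U \<longrightarrow> emeasure \<mu> U > 0}"

fun Theta :: "nat \<Rightarrow> (real \<times> real) set" where
  "Theta 0 = {2..8} \<times> {2..8}"
| "Theta (Suc n) = (\<Union>\<tau>\<in>perms3. F_map \<tau> ` Theta n)"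

definition Theta2 :: "(real \<times> real) set" where
  "Theta2 = (\<Inter>n. Theta n)"

end

theory Submission
  imports Defs "HOL-Combinatorics.Permutations"
begin

definition trip :: "(nat \<Rightarrow> nat) \<Rightarrow> nat \<times> nat \<times> nat" where
  "trip \<tau> = (\<tau> 0, \<tau> 1, \<tau> 2)"

definition six :: "(nat \<times> nat \<times> nat) set" where
  "six = {(0,1,2),(0,2,1),(1,0,2),(1,2,0),(2,0,1),(2,1,0)}"

lemma trip_six: assumes "\<tau> \<in> perms3" shows "trip \<tau> \<in> six"
proof -
  have p: "\<tau> permutes {0,1,2}" using assms by (simp add: perms3_def)
  have im: "\<tau> ` {0,1,2} = {0,1,2}" using permutes_image[OF p] .
  have inj: "inj \<tau>" using permutes_inj[OF p] .
  have a: "\<tau> 0 \<in> {0,1,2}" "\<tau> 1 \<in> {0,1,2}" "\<tau> 2 \<in> {0,1,2}"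
    by (simp_all only: permutes_in_image[OF p]) simp_all
  have d: "\<tau> 0 \<noteq> \<tau> 1" "\<tau> 0 \<noteq> \<tau> 2" "\<tau> 1 \<noteq> \<tau> 2" by (simp_all add: inj_eq[OF inj])
  have "\<And>x y z::nat. x \<in> {0,1,2} \<Longrightarrow> y \<in> {0,1,2} \<Longrightarrow> z \<in> {0,1,2} \<Longrightarrow>
    x \<noteq> y \<Longrightarrow> x \<noteq> z \<Longrightarrow> y \<noteq> z \<Longrightarrow> (x,y,z) \<in> six"
    unfolding six_def by (elim insertE emptyE; simp)
  then show ?thesis using a d unfolding trip_def by blast
qed

lemma perms3_finite: "finite perms3"
  unfolding perms3_def by (rule finite_permutations) simp

lemma id_perms3: "id \<in> perms3"
  unfolding perms3_def by (simp add: permutes_id)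

lemma trip_image: "trip ` perms3 = six"
proof -
  have inj: "inj_on trip perms3"
  proof
    fix \<sigma> \<tau> assume s: "\<sigma> \<in> perms3" and t: "\<tau> \<in> perms3" and e: "trip \<sigma> = trip \<tau>"
    show "\<sigma> = \<tau>"
    proof
      fix n
      show "\<sigma> n = \<tau> n"
      proof (cases "n \<in> {0,1,2}")
        case True then show ?thesis using e by (auto simp: trip_def)
      next
        case False then show ?thesis using s t
          by (simp add: perms3_def permutes_not_in)
      qed
    qed
  qed
  have c: "card perms3 = 6"
    unfolding perms3_def using card_permutations[of "{0::nat,1,2}" 3] by (simp add: fact_numeral)
  have "card (trip ` perms3) = 6" using card_image[OF inj] c by simp
  moreover have "card six = 6" by (simp add: six_def)
  moreover have "trip ` perms3 \<subseteq> six" using trip_six by auto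
  ultimately show ?thesis by (metis card_subset_eq finite.emptyI finite.insertI six_def)
qed

definition Ep :: "nat \<times> nat \<times> nat \<Rightarrow> nat \<Rightarrow> nat set" where
  "Ep t i = (case t of (a,b,c) \<Rightarrow>
     (if min a b < i \<and> i \<le> max a b then {1} else {}) \<union>
     (if min b c < i \<and> i \<le> max b c then {2} else {}))"

lemma E_set_Ep: "E_set \<tau> i = Ep (trip \<tau>) i"
  unfolding E_set_def Ep_def trip_def by auto

lemma Ep_cases: assumes "t \<in> six" "i \<in> {1,2}"
  shows "Ep t i \<in> {{1},{2},{1,2}}"
  using assms unfolding six_def Ep_def by auto

lemma Ep_not_both: assumes "t \<in> six"
  shows "Ep t 1 \<noteq> {1,2} \<or> Ep t 2 \<noteq> {1,2}"
  using assms unfolding six_def Ep_def by auto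

lemma inj_trip: "inj_on trip perms3"
proof
  fix \<sigma> \<tau> assume s: "\<sigma> \<in> perms3" and t: "\<tau> \<in> perms3" and e: "trip \<sigma> = trip \<tau>"
  show "\<sigma> = \<tau>"
  proof
    fix n
    show "\<sigma> n = \<tau> n"
    proof (cases "n \<in> {0,1,2}")
      case True then show ?thesis using e by (auto simp: trip_def)
    next
      case False then show ?thesis using s t
        by (simp add: perms3_def permutes_not_in)
    qed
  qed
qed

lemma E_cases: "\<tau> \<in> perms3 \<Longrightarrow> i \<in> {1,2} \<Longrightarrow> E_set \<tau> i \<in> {{1},{2},{1,2}}"
  unfolding E_set_Ep by (rule Ep_cases[OF trip_six])

lemma E_not_both: "\<tau> \<in> perms3 \<Longrightarrow> E_set \<tau> 1 \<noteq> {1,2} \<or> E_set \<tau> 2 \<noteq> {1,2}"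
  unfolding E_set_Ep by (rule Ep_not_both[OF trip_six])

definition sq :: "real \<Rightarrow> real" where "sq x = sqrt (2 * x)"

abbreviation T0 :: "(real \<times> real) set" where "T0 \<equiv> {2..8} \<times> {2..8}"

lemma coord1[simp]: "coord c 1 = fst c" and coord2[simp]: "coord c 2 = snd c"
  and coord1'[simp]: "coord c (Suc 0) = fst c"
  by (simp_all add: coord_def)

lemma F_comp_cases:
  assumes "\<tau> \<in> perms3" "i \<in> {1,2}"
  shows "F_comp \<tau> i c = sq (fst c) \<or> F_comp \<tau> i c = sq (snd c) \<or> F_comp \<tau> i c = sq (fst c) + sq (snd c)"
proof -
  from E_cases[OF assms] have "E_set \<tau> i = {1} \<or> E_set \<tau> i = {2} \<or> E_set \<tau> i = {1,2}" by simp
  then show ?thesis unfolding F_comp_def sq_def by (elim disjE) simp_all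
qed

lemma sq_bounds: assumes "2 \<le> x" "x \<le> 8" shows "2 \<le> sq x" "sq x \<le> 4"
proof -
  have "sqrt 4 \<le> sqrt (2*x)" using assms by (intro real_sqrt_le_mono) simp
  then show "2 \<le> sq x" by (simp add: sq_def)
  have "sqrt (2*x) \<le> sqrt 16" using assms by (intro real_sqrt_le_mono) simp
  then show "sq x \<le> 4" by (simp add: sq_def)
qed

lemma sq_lip: assumes "2 \<le> x" "2 \<le> y" shows "\<bar>sq x - sq y\<bar> \<le> \<bar>x - y\<bar> / 2"
proof -
  have px: "2 \<le> sq x" and py: "2 \<le> sq y"
    unfolding sq_def by (rule real_le_rsqrt, use assms in simp)+
  have e: "(sq x - sq y) * (sq x + sq y) = 2 * (x - y)"
    using assms by (simp add: sq_def algebra_simps)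
  have "\<bar>sq x - sq y\<bar> * (sq x + sq y) = 2 * \<bar>x - y\<bar>"
    using e px py by (metis abs_mult abs_of_nonneg add_nonneg_nonneg abs_numeral order_trans zero_le_numeral)
  moreover have "\<bar>sq x - sq y\<bar> * 4 \<le> \<bar>sq x - sq y\<bar> * (sq x + sq y)"
    using px py by (intro mult_left_mono) auto
  ultimately have "\<bar>sq x - sq y\<bar> * 4 \<le> 2 * \<bar>x - y\<bar>" by (rule ord_le_eq_trans[rotated])
  then show ?thesis by (simp add: field_simps)
qed

lemma F_comp_T0: assumes "\<tau> \<in> perms3" "i \<in> {1,2}" "c \<in> T0"
  shows "2 \<le> F_comp \<tau> i c" "F_comp \<tau> i c \<le> 8"
  using F_comp_cases[OF assms(1,2), of c] sq_bounds[of "fst c"] sq_bounds[of "snd c"] assms(3)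
  by (auto simp: mem_Times_iff)

lemma F_map_T0: "\<tau> \<in> perms3 \<Longrightarrow> c \<in> T0 \<Longrightarrow> F_map \<tau> c \<in> T0"
  using F_comp_T0[of \<tau> 1 c] F_comp_T0[of \<tau> 2 c] by (simp add: F_map_def)

lemma w_lower: assumes "\<tau> \<in> perms3" "c \<in> T0" shows "1/64 \<le> w_weight \<tau> c"
proof -
  have q: "1/4 \<le> sqrt (2 * coord c i) / F_comp \<tau> i c" if "i \<in> {1,2}" for i
  proof -
    have "2 \<le> sqrt (2 * coord c i)" using that sq_bounds[of "fst c"] sq_bounds[of "snd c"] assms(2)
      by (auto simp: sq_def mem_Times_iff)
    moreover have "2 \<le> F_comp \<tau> i c" "F_comp \<tau> i c \<le> 8" using F_comp_T0 assms that by auto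
    ultimately show ?thesis by (simp add: field_simps)
  qed
  have "w_weight \<tau> c = 1/4 * ((sqrt (2 * coord c 1) / F_comp \<tau> 1 c) * (sqrt (2 * coord c 2) / F_comp \<tau> 2 c))"
    by (simp add: w_weight_def)
  also have "\<dots> \<ge> 1/4 * ((1/4) * (1/4))"
  proof -
    have q1: "1/4 \<le> sqrt (2 * coord c 1) / F_comp \<tau> 1 c" and q2: "1/4 \<le> sqrt (2 * coord c 2) / F_comp \<tau> 2 c"
      by (rule q, simp)+
    have "(1/4) * (1/4) \<le> (sqrt (2 * coord c 1) / F_comp \<tau> 1 c) * (sqrt (2 * coord c 2) / F_comp \<tau> 2 c)"
      by (rule mult_mono[OF q1 q2]) (use q1 in linarith)+
    then show ?thesis by (rule mult_left_mono) simp
  qed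
  finally show ?thesis by simp
qed

definition Wt :: "nat \<times> nat \<times> nat \<Rightarrow> real \<times> real \<Rightarrow> real" where
  "Wt t c = 1/4 * (\<Prod>i\<in>{1,2}. sqrt (2 * coord c i) / (\<Sum>j\<in>Ep t i. sqrt (2 * coord c j)))"

lemma w_Wt: "w_weight \<tau> c = Wt (trip \<tau>) c"
  by (simp add: w_weight_def Wt_def F_comp_def E_set_Ep)

lemma w_sum: assumes "c \<in> T0" shows "(\<Sum>\<tau>\<in>perms3. w_weight \<tau> c) = 1"
proof -
  have "(\<Sum>\<tau>\<in>perms3. w_weight \<tau> c) = (\<Sum>\<tau>\<in>perms3. Wt (trip \<tau>) c)" by (simp add: w_Wt)
  also have "\<dots> = (\<Sum>t\<in>trip ` perms3. Wt t c)" using sum.reindex[OF inj_trip, of "\<lambda>t. Wt t c"] by simp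
  also have "\<dots> = (\<Sum>t\<in>six. Wt t c)" by (simp add: trip_image)
  also have "\<dots> = 1"
  proof -
    define a where "a = sqrt (2 * fst c)"
    define b where "b = sqrt (2 * snd c)"
    have a: "a > 0" and b: "b > 0" using assms by (auto simp: a_def b_def mem_Times_iff)
    have "(\<Sum>t\<in>six. Wt t c) = 1/4 + 1/4 + 2 * (1/4 * (a / (a+b))) + 2 * (1/4 * (b/(a+b)))"
      using assms by (simp add: six_def Wt_def Ep_def a_def b_def mem_Times_iff)
    also have "\<dots> = 1"
    proof -
      have "a/(a+b) + b/(a+b) = 1" using a b by (simp add: add_divide_distrib[symmetric])
      then show ?thesis by linarith
    qed
    finally show ?thesis .
  qed
  finally show ?thesis .
qed

definition D :: "real \<times> real \<Rightarrow> real \<times> real \<Rightarrow> real" where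
  "D a b = max \<bar>fst a - fst b\<bar> \<bar>snd a - snd b\<bar>"

definition S :: "real \<times> real \<Rightarrow> real \<times> real \<Rightarrow> real" where
  "S a b = \<bar>fst a - fst b\<bar> + \<bar>snd a - snd b\<bar>"

lemma F_comp_diff:
  assumes "\<tau> \<in> perms3" "i \<in> {1,2}" "a \<in> T0" "b \<in> T0"
  shows "\<bar>F_comp \<tau> i a - F_comp \<tau> i b\<bar> \<le> (if E_set \<tau> i = {1,2} then S a b / 2 else D a b / 2)"
proof -
  have l1: "\<bar>sq (fst a) - sq (fst b)\<bar> \<le> \<bar>fst a - fst b\<bar> / 2"
    using assms(3,4) by (intro sq_lip) (auto simp: mem_Times_iff)
  have l2: "\<bar>sq (snd a) - sq (snd b)\<bar> \<le> \<bar>snd a - snd b\<bar> / 2"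
    using assms(3,4) by (intro sq_lip) (auto simp: mem_Times_iff)
  from E_cases[OF assms(1,2)] have "E_set \<tau> i = {1} \<or> E_set \<tau> i = {2} \<or> E_set \<tau> i = {1,2}" by simp
  then show ?thesis
  proof (elim disjE)
    assume e: "E_set \<tau> i = {1}"
    have "F_comp \<tau> i a - F_comp \<tau> i b = sq (fst a) - sq (fst b)" unfolding F_comp_def e sq_def by simp
    then show ?thesis using l1 e by (simp add: D_def)
  next
    assume e: "E_set \<tau> i = {2}"
    have "F_comp \<tau> i a - F_comp \<tau> i b = sq (snd a) - sq (snd b)" unfolding F_comp_def e sq_def by simp
    then show ?thesis using l2 e by (simp add: D_def)
  next
    assume e: "E_set \<tau> i = {1,2}"
    have "F_comp \<tau> i a - F_comp \<tau> i b = (sq (fst a) - sq (fst b)) + (sq (snd a) - sq (snd b))"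
      unfolding F_comp_def e sq_def by simp
    then show ?thesis using l1 l2 e abs_triangle_ineq[of "sq (fst a) - sq (fst b)" "sq (snd a) - sq (snd b)"]
      by (simp add: S_def)
  qed
qed

lemma F_comp_diff2:
  assumes "\<tau> \<in> perms3" "i \<in> {1,2}" "a \<in> T0" "b \<in> T0"
  shows "\<bar>F_comp \<tau> i a - F_comp \<tau> i b\<bar> \<le> S a b / 2"
  using F_comp_diff[OF assms] by (auto simp: S_def D_def split: if_splits)

lemma D_F: assumes "\<tau> \<in> perms3" "a \<in> T0" "b \<in> T0"
  shows "D (F_map \<tau> a) (F_map \<tau> b) \<le> S a b / 2"
  using F_comp_diff2[OF assms(1) _ assms(2,3), of 1] F_comp_diff2[OF assms(1) _ assms(2,3), of 2]
  by (simp add: D_def F_map_def)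

lemma D_nonneg: "0 \<le> D a b"
  by (simp add: D_def)

lemma S_le_D: "S a b \<le> 2 * D a b"
  by (auto simp: S_def D_def max_def)

lemma D_F1: assumes "\<tau> \<in> perms3" "a \<in> T0" "b \<in> T0"
  shows "D (F_map \<tau> a) (F_map \<tau> b) \<le> D a b"
  using D_F[OF assms] S_le_D[of a b] by linarith

lemma S_F: assumes "\<tau> \<in> perms3" "a \<in> T0" "b \<in> T0"
  shows "S (F_map \<tau> a) (F_map \<tau> b) \<le> 3/2 * D a b"
proof -
  have c1: "\<bar>F_comp \<tau> 1 a - F_comp \<tau> 1 b\<bar> \<le> (if E_set \<tau> 1 = {1,2} then S a b / 2 else D a b / 2)"
    using F_comp_diff[OF assms(1) _ assms(2,3)] by simp
  have c2: "\<bar>F_comp \<tau> 2 a - F_comp \<tau> 2 b\<bar> \<le> (if E_set \<tau> 2 = {1,2} then S a b / 2 else D a b / 2)"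
    using F_comp_diff[OF assms(1) _ assms(2,3)] by simp
  have "S (F_map \<tau> a) (F_map \<tau> b) = \<bar>F_comp \<tau> 1 a - F_comp \<tau> 1 b\<bar> + \<bar>F_comp \<tau> 2 a - F_comp \<tau> 2 b\<bar>"
    by (simp add: S_def F_map_def)
  also have "\<dots> \<le> 3/2 * D a b"
  proof -
    have d1: "\<bar>F_comp \<tau> 1 a - F_comp \<tau> 1 b\<bar> \<le> D a b" and d2: "\<bar>F_comp \<tau> 2 a - F_comp \<tau> 2 b\<bar> \<le> D a b"
      using c1 c2 S_le_D[of a b] D_nonneg[of a b] by (auto split: if_splits)
    from E_not_both[OF assms(1)] show ?thesis
    proof
      assume "E_set \<tau> 1 \<noteq> {1,2}"
      then have "\<bar>F_comp \<tau> 1 a - F_comp \<tau> 1 b\<bar> \<le> D a b / 2" using c1 by simp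
      then show ?thesis using d2 by linarith
    next
      assume "E_set \<tau> 2 \<noteq> {1,2}"
      then have "\<bar>F_comp \<tau> 2 a - F_comp \<tau> 2 b\<bar> \<le> D a b / 2" using c2 by simp
      then show ?thesis using d1 by linarith
    qed
  qed
  finally show ?thesis .
qed

lemma D_FF: assumes "\<tau> \<in> perms3" "\<sigma> \<in> perms3" "a \<in> T0" "b \<in> T0"
  shows "D (F_map \<sigma> (F_map \<tau> a)) (F_map \<sigma> (F_map \<tau> b)) \<le> 3/4 * D a b"
  using D_F[OF assms(2) F_map_T0[OF assms(1,3)] F_map_T0[OF assms(1,4)]] S_F[OF assms(1,3,4)]
  by linarith

fun G :: "(nat \<Rightarrow> nat) list \<Rightarrow> real \<times> real \<Rightarrow> real \<times> real" where
  "G [] c = c"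
| "G (\<tau> # w) c = F_map \<tau> (G w c)"

lemma G_T0: "set w \<subseteq> perms3 \<Longrightarrow> c \<in> T0 \<Longrightarrow> G w c \<in> T0"
  by (induction w) (auto intro: F_map_T0)

lemma D_G: "set w \<subseteq> perms3 \<Longrightarrow> a \<in> T0 \<Longrightarrow> b \<in> T0 \<Longrightarrow>
  D (G w a) (G w b) \<le> (3/4) ^ (length w div 2) * D a b"
proof (induction w rule: induct_list012)
  case 1 then show ?case by simp
next
  case (2 x) then show ?case using D_F1[of x a b] by simp
next
  case (3 x y w)
  have "D (G (x # y # w) a) (G (x # y # w) b) \<le> 3/4 * D (G w a) (G w b)"
    using 3(3-5) D_FF[of y x "G w a" "G w b"] G_T0[of w a] G_T0[of w b] by simp
  also have "\<dots> \<le> 3/4 * ((3/4) ^ (length w div 2) * D a b)"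
    using 3 by (intro mult_left_mono) auto
  finally show ?case by simp
qed

lemma cont_coord: "continuous_on UNIV (\<lambda>c. coord c j)"
  by (cases "j = 1") (simp_all add: coord_def continuous_intros)

lemma cont_F_comp: "continuous_on UNIV (F_comp \<tau> i)"
  unfolding F_comp_def
  by (intro continuous_on_sum continuous_intros continuous_on_compose2[OF continuous_on_real_sqrt]
      continuous_on_mult[OF continuous_on_const cont_coord]) auto

lemma cont_F_map: "continuous_on UNIV (F_map \<tau>)"
  unfolding F_map_def by (intro continuous_on_Pair cont_F_comp)

lemma F_map_meas[measurable]: "F_map \<tau> \<in> borel_measurable borel"
  using cont_F_map by (rule borel_measurable_continuous_onI)

lemma Theta_compact: "compact (Theta n)"
proof (induction n)
  case 0 then show ?case by (simp add: compact_Times)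
next
  case (Suc n)
  show ?case
    using perms3_finite Suc
    by (auto intro!: compact_UN compact_continuous_image continuous_on_subset[OF cont_F_map])
qed

lemma Theta_T0: "Theta n \<subseteq> T0"
proof (induction n)
  case 0 show ?case by simp
next
  case (Suc n)
  show ?case
  proof
    fix x assume "x \<in> Theta (Suc n)"
    then obtain \<tau> z where "\<tau> \<in> perms3" "z \<in> Theta n" "x = F_map \<tau> z" by auto
    then show "x \<in> T0" using Suc F_map_T0 by blast
  qed
qed

lemma Theta_Suc: "Theta (Suc n) \<subseteq> Theta n"
proof (induction n)
  case 0 show ?case
  proof
    fix x assume "x \<in> Theta (Suc 0)"
    then obtain \<tau> z where "\<tau> \<in> perms3" "z \<in> Theta 0" "x = F_map \<tau> z" by auto
    then show "x \<in> Theta 0" using F_map_T0 Theta.simps(1) by metis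
  qed
next
  case (Suc n)
  then show ?case by (simp only: Theta.simps) blast
qed

lemma Theta_mono: "m \<le> n \<Longrightarrow> Theta n \<subseteq> Theta m"
  using Theta_Suc by (rule decseqD[OF decseq_SucI])

lemma Theta_words: "x \<in> Theta n \<Longrightarrow> \<exists>w y. set w \<subseteq> perms3 \<and> length w = n \<and> y \<in> T0 \<and> x = G w y"
proof (induction n arbitrary: x)
  case 0 then show ?case by (intro exI[of _ "[]"] exI[of _ x]) simp
next
  case (Suc n)
  then obtain \<tau> z where t: "\<tau> \<in> perms3" "z \<in> Theta n" "x = F_map \<tau> z" by auto
  from Suc.IH[OF t(2)] obtain w y where "set w \<subseteq> perms3" "length w = n" "y \<in> T0" "z = G w y" by blast
  then show ?case using t by (intro exI[of _ "\<tau> # w"] exI[of _ y]) auto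
qed

lemma coord_meas[measurable]: "(\<lambda>c. coord c j) \<in> borel_measurable borel"
  using cont_coord by (rule borel_measurable_continuous_onI)

lemma F_comp_meas[measurable]: "F_comp \<tau> i \<in> borel_measurable borel"
  using cont_F_comp by (rule borel_measurable_continuous_onI)

lemma w_meas[measurable]: "(\<lambda>c. w_weight \<tau> c) \<in> borel_measurable borel"
  unfolding w_weight_def by measurable

lemma sa_borel: "sigma_algebra UNIV (sets borel)"
  using sets.sigma_algebra_axioms[of borel] by simp

lemma Qsets: "sets (Qstep \<nu>) = sets borel"
  unfolding Qstep_def by (simp add: sigma_algebra.sets_measure_of_eq[OF sa_borel])

lemma Qemeas:
  assumes nu: "sets \<nu> = sets borel" and A: "A \<in> sets borel"
  shows "emeasure (Qstep \<nu>) A = (\<integral>\<^sup>+ c. (\<Sum>\<tau>\<in>perms3. ennreal (w_weight \<tau> c) * indicator A (F_map \<tau> c)) \<partial>\<nu>)"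
proof -
  note [measurable_cong] = nu
  define \<mu> where "\<mu> = (\<lambda>A. \<integral>\<^sup>+ c. (\<Sum>\<tau>\<in>perms3. ennreal (w_weight \<tau> c) * indicator A (F_map \<tau> c)) \<partial>\<nu>)"
  have pos: "positive (sets borel) \<mu>" unfolding positive_def \<mu>_def by simp
  have ca: "countably_additive (sets borel) \<mu>"
  proof (rule countably_additiveI)
    fix B :: "nat \<Rightarrow> (real \<times> real) set"
    assume B: "range B \<subseteq> sets borel" "disjoint_family B" "\<Union> (range B) \<in> sets borel"
    have m: "(\<lambda>c. \<Sum>\<tau>\<in>perms3. ennreal (w_weight \<tau> c) * indicator (B i) (F_map \<tau> c)) \<in> borel_measurable \<nu>" for i
      using B(1) by measurable
    have "(\<Sum>i. \<mu> (B i)) = (\<integral>\<^sup>+ c. (\<Sum>i. \<Sum>\<tau>\<in>perms3. ennreal (w_weight \<tau> c) * indicator (B i) (F_map \<tau> c)) \<partial>\<nu>)"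
      unfolding \<mu>_def by (rule nn_integral_suminf[symmetric]) (rule m)
    also have "\<dots> = \<mu> (\<Union> (range B))"
      unfolding \<mu>_def
    proof (rule nn_integral_cong)
      fix c
      have "(\<Sum>i. \<Sum>\<tau>\<in>perms3. ennreal (w_weight \<tau> c) * indicator (B i) (F_map \<tau> c))
          = (\<Sum>\<tau>\<in>perms3. \<Sum>i. ennreal (w_weight \<tau> c) * indicator (B i) (F_map \<tau> c))"
        by (rule suminf_sum) simp
      also have "\<dots> = (\<Sum>\<tau>\<in>perms3. ennreal (w_weight \<tau> c) * indicator (\<Union> (range B)) (F_map \<tau> c))"
        by (simp add: suminf_indicator[OF B(2)])
      finally show "(\<Sum>i. \<Sum>\<tau>\<in>perms3. ennreal (w_weight \<tau> c) * indicator (B i) (F_map \<tau> c))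
          = (\<Sum>\<tau>\<in>perms3. ennreal (w_weight \<tau> c) * indicator (\<Union> (range B)) (F_map \<tau> c))" .
    qed
    finally show "(\<Sum>i. \<mu> (B i)) = \<mu> (\<Union> (range B))" .
  qed
  have "emeasure (Qstep \<nu>) A = \<mu> A"
    unfolding Qstep_def \<mu>_def[symmetric]
    by (rule emeasure_measure_of_sigma[OF sa_borel pos ca A])
  then show ?thesis by (simp add: \<mu>_def)
qed

lemma Theta_borel: "Theta n \<in> sets borel"
  by (rule borel_closed) (simp add: compact_imp_closed Theta_compact)

lemma Theta_cborel: "UNIV - Theta n \<in> sets borel"
  by (rule borel_open) (simp add: open_Diff compact_imp_closed Theta_compact)

lemma AE_Theta:
  assumes "sets \<nu> = sets borel" "emeasure \<nu> (UNIV - Theta n) = 0"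
  shows "AE c in \<nu>. c \<in> Theta n"
proof -
  have "UNIV - Theta n \<in> null_sets \<nu>" using assms Theta_cborel by (simp add: null_sets_def)
  from AE_not_in[OF this] show ?thesis by simp
qed

lemma Q_support:
  assumes nu: "sets \<nu> = sets borel" and z: "emeasure \<nu> (UNIV - Theta n) = 0"
  shows "emeasure (Qstep \<nu>) (UNIV - Theta (Suc n)) = 0"
proof -
  have "emeasure (Qstep \<nu>) (UNIV - Theta (Suc n))
     = (\<integral>\<^sup>+ c. (\<Sum>\<tau>\<in>perms3. ennreal (w_weight \<tau> c) * indicator (UNIV - Theta (Suc n)) (F_map \<tau> c)) \<partial>\<nu>)"
    by (rule Qemeas[OF nu Theta_cborel])
  also have "\<dots> = (\<integral>\<^sup>+ c. 0 \<partial>\<nu>)"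
    using AE_Theta[OF nu z]
  proof (rule AE_mp[THEN nn_integral_cong_AE], intro AE_I2 impI)
    fix c assume "c \<in> Theta n"
    then have "F_map \<tau> c \<in> Theta (Suc n)" if "\<tau> \<in> perms3" for \<tau> using that by auto
    then show "(\<Sum>\<tau>\<in>perms3. ennreal (w_weight \<tau> c) * indicator (UNIV - Theta (Suc n)) (F_map \<tau> c)) = 0"
      by (intro sum.neutral) auto
  qed
  finally show ?thesis by simp
qed

lemma Q_mass:
  assumes nu: "sets \<nu> = sets borel" and z: "emeasure \<nu> (UNIV - Theta n) = 0" and one: "emeasure \<nu> UNIV = 1"
  shows "emeasure (Qstep \<nu>) UNIV = 1"
proof -
  have "emeasure (Qstep \<nu>) UNIV
     = (\<integral>\<^sup>+ c. (\<Sum>\<tau>\<in>perms3. ennreal (w_weight \<tau> c) * indicator UNIV (F_map \<tau> c)) \<partial>\<nu>)"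
    by (rule Qemeas[OF nu]) simp
  also have "\<dots> = (\<integral>\<^sup>+ c. 1 \<partial>\<nu>)"
    using AE_Theta[OF nu z]
  proof (rule AE_mp[THEN nn_integral_cong_AE], intro AE_I2 impI)
    fix c assume "c \<in> Theta n"
    then have c: "c \<in> T0" using Theta_T0 by blast
    have "(\<Sum>\<tau>\<in>perms3. ennreal (w_weight \<tau> c) * indicator UNIV (F_map \<tau> c)) = (\<Sum>\<tau>\<in>perms3. ennreal (w_weight \<tau> c))"
      by simp
    also have "\<dots> = ennreal (\<Sum>\<tau>\<in>perms3. w_weight \<tau> c)"
      using w_lower[OF _ c] by (intro sum_ennreal) (meson order_trans zero_le_divide_1_iff zero_le_numeral)
    also have "\<dots> = 1" using w_sum[OF c] by simp
    finally show "(\<Sum>\<tau>\<in>perms3. ennreal (w_weight \<tau> c) * indicator UNIV (F_map \<tau> c)) = 1" .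
  qed
  also have "\<dots> = emeasure \<nu> UNIV"
    using sets_eq_imp_space_eq[OF nu] by simp
  finally show ?thesis using one by simp
qed

lemma Q_lower:
  assumes nu: "sets \<nu> = sets borel" and z: "emeasure \<nu> (UNIV - Theta n) = 0"
    and t: "\<tau> \<in> perms3" and A: "A \<in> sets borel" "F_map \<tau> ` A \<in> sets borel"
  shows "ennreal (1/64) * emeasure \<nu> A \<le> emeasure (Qstep \<nu>) (F_map \<tau> ` A)"
proof -
  have "ennreal (1/64) * emeasure \<nu> A = (\<integral>\<^sup>+ c. ennreal (1/64) * indicator A c \<partial>\<nu>)"
    using A nu by (simp add: nn_integral_cmult_indicator)
  also have "\<dots> \<le> (\<integral>\<^sup>+ c. (\<Sum>\<sigma>\<in>perms3. ennreal (w_weight \<sigma> c) * indicator (F_map \<tau> ` A) (F_map \<sigma> c)) \<partial>\<nu>)"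
    using AE_Theta[OF nu z]
  proof (rule AE_mp[THEN nn_integral_mono_AE], intro AE_I2 impI)
    fix c assume "c \<in> Theta n"
    then have c: "c \<in> T0" using Theta_T0 by blast
    have "ennreal (1/64) * indicator A c \<le> ennreal (w_weight \<tau> c) * indicator (F_map \<tau> ` A) (F_map \<tau> c)"
      using w_lower[OF t c] by (auto simp: indicator_def intro: ennreal_leI)
    also have "\<dots> \<le> (\<Sum>\<sigma>\<in>perms3. ennreal (w_weight \<sigma> c) * indicator (F_map \<tau> ` A) (F_map \<sigma> c))"
      by (rule member_le_sum[OF t _ perms3_finite]) simp
    finally show "ennreal (1/64) * indicator A c \<le> (\<Sum>\<sigma>\<in>perms3. ennreal (w_weight \<sigma> c) * indicator (F_map \<tau> ` A) (F_map \<sigma> c))" .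
  qed
  also have "\<dots> = emeasure (Qstep \<nu>) (F_map \<tau> ` A)"
    by (rule Qemeas[OF nu A(2), symmetric])
  finally show ?thesis .
qed

lemma iter_props:
  assumes "sets \<nu>0 = sets borel" "emeasure \<nu>0 (UNIV - Theta 0) = 0" "emeasure \<nu>0 UNIV = 1"
  shows "sets ((Qstep ^^ n) \<nu>0) = sets borel \<and> emeasure ((Qstep ^^ n) \<nu>0) (UNIV - Theta n) = 0
       \<and> emeasure ((Qstep ^^ n) \<nu>0) UNIV = 1"
proof (induction n)
  case 0 then show ?case using assms by simp
next
  case (Suc n)
  then show ?case using Q_support[of "(Qstep ^^ n) \<nu>0" n] Q_mass[of "(Qstep ^^ n) \<nu>0" n]
    by (simp add: Qsets)
qed

lemma cont_G: "continuous_on UNIV (G w)"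
proof (induction w)
  case Nil
  have "G [] = (\<lambda>c. c)" by (rule ext) simp
  then show ?case by (simp add: continuous_on_id)
next
  case (Cons \<tau> w)
  have "G (\<tau> # w) = (\<lambda>c. F_map \<tau> (G w c))" by (rule ext) simp
  then show ?case using continuous_on_compose2[OF cont_F_map Cons] by simp
qed

lemma GT0_borel: "G w ` T0 \<in> sets borel"
  by (rule borel_closed, rule compact_imp_closed, rule compact_continuous_image)
     (auto intro: continuous_on_subset[OF cont_G] simp: compact_Times)

lemma iter_word:
  assumes "sets \<nu>0 = sets borel" "emeasure \<nu>0 (UNIV - Theta 0) = 0" "emeasure \<nu>0 UNIV = 1"
  shows "set w \<subseteq> perms3 \<Longrightarrow> length w \<le> n \<Longrightarrow>
    ennreal ((1/64) ^ length w) \<le> emeasure ((Qstep ^^ n) \<nu>0) (G w ` T0)"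
proof (induction w arbitrary: n)
  case Nil
  note P = iter_props[OF assms, of n]
  have "1 \<le> emeasure ((Qstep ^^ n) \<nu>0) (Theta n \<union> (UNIV - Theta n))" using P by simp
  also have "\<dots> \<le> emeasure ((Qstep ^^ n) \<nu>0) (Theta n) + emeasure ((Qstep ^^ n) \<nu>0) (UNIV - Theta n)"
    by (rule emeasure_subadditive) (use P Theta_borel Theta_cborel in auto)
  also have "\<dots> = emeasure ((Qstep ^^ n) \<nu>0) (Theta n)" using P by simp
  also have "\<dots> \<le> emeasure ((Qstep ^^ n) \<nu>0) T0"
    by (rule emeasure_mono) (use P Theta_T0 Theta_borel[of 0] in auto)
  finally show ?case by simp
next
  case (Cons \<tau> w)
  then obtain m where n: "n = Suc m" and m: "length w \<le> m" by (cases n) auto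
  have t: "\<tau> \<in> perms3" and w: "set w \<subseteq> perms3" using Cons.prems by auto
  note P = iter_props[OF assms, of m]
  have img: "G (\<tau> # w) ` T0 = F_map \<tau> ` (G w ` T0)" by (simp add: image_image)
  have "ennreal ((1/64) ^ length (\<tau> # w)) = ennreal (1/64) * ennreal ((1/64) ^ length w)"
    by (simp add: ennreal_mult[symmetric])
  also have "\<dots> \<le> ennreal (1/64) * emeasure ((Qstep ^^ m) \<nu>0) (G w ` T0)"
    by (rule mult_left_mono[OF Cons.IH[OF w m]]) simp
  also have "\<dots> \<le> emeasure (Qstep ((Qstep ^^ m) \<nu>0)) (F_map \<tau> ` (G w ` T0))"
  proof -
    have b: "F_map \<tau> ` (G w ` T0) \<in> sets borel" unfolding img[symmetric] by (rule GT0_borel)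
    show ?thesis using P Q_lower[OF _ _ t GT0_borel b, of "(Qstep ^^ m) \<nu>0" m] by blast
  qed
  also have "\<dots> = emeasure ((Qstep ^^ n) \<nu>0) (G (\<tau> # w) ` T0)"
    unfolding img n by simp
  finally show ?case .
qed

lemma dist_le_S: "dist u v \<le> S u v"
  unfolding dist_prod_def S_def dist_real_def
  using sqrt_sum_squares_le_sum_abs[of "fst u - fst v" "snd u - snd v"] by simp

lemma D_T0: "a \<in> T0 \<Longrightarrow> b \<in> T0 \<Longrightarrow> D a b \<le> 6"
  by (auto simp: D_def mem_Times_iff abs_le_iff)

lemma small_word:
  assumes x: "x \<in> Theta2" and e: "e > 0"
  shows "\<exists>w. set w \<subseteq> perms3 \<and> G w ` T0 \<subseteq> cball x e"
proof -
  obtain N where N: "(3/4::real) ^ N < e / 12" using real_arch_pow_inv[of "e/12" "3/4"] e by auto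
  have "x \<in> Theta (2 * N)" using x by (simp add: Theta2_def)
  then obtain w y where w: "set w \<subseteq> perms3" "length w = 2 * N" "y \<in> T0" "x = G w y"
    using Theta_words by blast
  have "G w ` T0 \<subseteq> cball x e"
  proof
    fix z assume "z \<in> G w ` T0"
    then obtain a where a: "a \<in> T0" "z = G w a" by auto
    have "dist x z \<le> S (G w y) (G w a)" using dist_le_S w(4) a(2) by simp
    also have "\<dots> \<le> 2 * D (G w y) (G w a)" by (rule S_le_D)
    also have "\<dots> \<le> 2 * ((3/4) ^ (length w div 2) * D y a)"
      using D_G[OF w(1) w(3) a(1)] by simp
    also have "\<dots> \<le> 2 * ((3/4) ^ N * 6)"
      using w(2) D_T0[OF w(3) a(1)] D_nonneg[of y a] by (intro mult_left_mono) auto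
    also have "\<dots> \<le> e" using N by simp
    finally show "z \<in> cball x e" by simp
  qed
  then show ?thesis using w(1) by blast
qed

theorem lemma2:
  fixes \<nu>2 :: "(real \<times> real) measure"
  assumes "prob_space \<nu>2" and "sets \<nu>2 = sets borel"
    and "\<And>\<nu>0. prob_space \<nu>0 \<Longrightarrow> sets \<nu>0 = sets borel \<Longrightarrow>
           emeasure \<nu>0 (UNIV - {2..8} \<times> {2..8}) = 0 \<Longrightarrow>
           weak_conv2 (\<lambda>n. (Qstep ^^ n) \<nu>0) \<nu>2"
  shows "Theta2 = msupport \<nu>2"
proof -
  define \<nu>0 :: "(real \<times> real) measure" where "\<nu>0 = return borel (2,2)"
  have s0: "sets \<nu>0 = sets borel" by (simp add: \<nu>0_def)
  have p0: "prob_space \<nu>0" unfolding \<nu>0_def by (rule prob_space_return) simp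
  have z0: "emeasure \<nu>0 (UNIV - {2..8} \<times> {2..8}) = 0"
    unfolding \<nu>0_def using Theta_cborel[of 0] by simp
  have z0': "emeasure \<nu>0 (UNIV - Theta 0) = 0" using z0 by simp
  have one0: "emeasure \<nu>0 UNIV = 1" unfolding \<nu>0_def by simp
  have wc: "weak_conv2 (\<lambda>n. (Qstep ^^ n) \<nu>0) \<nu>2" using assms(3)[OF p0 s0 z0] .
  note P = iter_props[OF s0 z0' one0]
  have sM: "sets ((Qstep ^^ n) \<nu>0) = sets borel" for n using P by blast
  have spM: "space ((Qstep ^^ n) \<nu>0) = UNIV" for n using sets_eq_imp_space_eq[OF sM[of n]] by simp
  have ps: "prob_space ((Qstep ^^ n) \<nu>0)" for n
    by (rule prob_spaceI) (use P spM in auto)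
  have sp2: "space \<nu>2 = UNIV" using sets_eq_imp_space_eq[OF assms(2)] by simp
  interpret N: prob_space \<nu>2 by (rule assms(1))
  have measM: "f \<in> borel_measurable ((Qstep ^^ n) \<nu>0)" if "f \<in> borel_measurable borel" for f :: "_ \<Rightarrow> real" and n
    by (subst measurable_cong_sets[OF sM[of n] refl]) (rule that)
  have meas2: "f \<in> borel_measurable \<nu>2" if "f \<in> borel_measurable borel" for f :: "_ \<Rightarrow> real"
    by (subst measurable_cong_sets[OF assms(2) refl]) (rule that)
  show ?thesis
  proof (intro equalityI subsetI)
    fix x assume x: "x \<in> Theta2"
    show "x \<in> msupport \<nu>2" unfolding msupport_def
    proof (intro CollectI allI impI)
      fix U assume U: "open U \<and> x \<in> U"
      obtain e where e: "e > 0" "ball x e \<subseteq> U" using U open_contains_ball by blast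
      obtain w where w: "set w \<subseteq> perms3" "G w ` T0 \<subseteq> cball x (e/2)" using small_word[OF x, of "e/2"] e by auto
      define f where "f z = min 1 (max 0 (2 - 2 * dist z x / e))" for z
      have fc: "continuous_on UNIV f" unfolding f_def using e by (intro continuous_intros) auto
      have f01: "0 \<le> f z" "f z \<le> 1" for z by (auto simp: f_def)
      have fb: "bounded (range f)" unfolding bounded_iff using f01 by (intro exI[of _ 1]) auto
      have fm: "f \<in> borel_measurable borel" by (rule borel_measurable_continuous_onI[OF fc])
      have lim: "(\<lambda>n. \<integral>z. f z \<partial>((Qstep ^^ n) \<nu>0)) \<longlonglongrightarrow> (\<integral>z. f z \<partial>\<nu>2)"
        using wc fc fb unfolding weak_conv2_def by blast
      have lb: "(1/64) ^ length w \<le> (\<integral>z. f z \<partial>((Qstep ^^ n) \<nu>0))" if n: "n \<ge> length w" for n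
      proof -
        let ?M = "(Qstep ^^ n) \<nu>0"
        interpret M: prob_space ?M by (rule ps)
        have K: "G w ` T0 \<in> sets ?M" using sM GT0_borel by simp
        have "ennreal ((1/64) ^ length w) \<le> emeasure ?M (G w ` T0)"
          by (rule iter_word[OF s0 z0' one0 w(1) n])
        then have "(1/64) ^ length w \<le> measure ?M (G w ` T0)"
          using M.emeasure_eq_measure by (simp add: ennreal_le_iff)
        also have "\<dots> = (\<integral>z. indicator (G w ` T0) z \<partial>?M)" using spM[of n] by simp
        also have "\<dots> \<le> (\<integral>z. f z \<partial>?M)"
        proof (rule integral_mono)
          show "integrable ?M (indicator (G w ` T0) :: _ \<Rightarrow> real)"
            by (rule M.integrable_const_bound[where B=1]) (use K in auto)
          show "integrable ?M f"
            by (rule M.integrable_const_bound[where B=1]) (use f01 measM[OF fm] in auto)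
          fix z
          show "indicator (G w ` T0) z \<le> f z"
          proof (cases "z \<in> G w ` T0")
            case True
            then have "dist z x \<le> e/2" using w(2) by (auto simp: dist_commute)
            then have "2 - 2 * dist z x / e \<ge> 1" using e by (simp add: field_simps)
            then show ?thesis using True by (simp add: f_def)
          next
            case False then show ?thesis using f01 by simp
          qed
        qed
        finally show ?thesis .
      qed
      have pos: "(1/64) ^ length w \<le> (\<integral>z. f z \<partial>\<nu>2)"
        by (rule LIMSEQ_le_const[OF lim]) (use lb in blast)
      show "emeasure \<nu>2 U > 0"
      proof (rule ccontr)
        assume "\<not> emeasure \<nu>2 U > 0"
        then have "emeasure \<nu>2 U = 0" by (simp add: not_gr_zero)
        moreover have "U \<in> sets \<nu>2" using U assms(2) by simp
        moreover have "ball x e \<in> sets \<nu>2" using assms(2) by simp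
        ultimately have "emeasure \<nu>2 (ball x e) = 0"
          using emeasure_mono[OF e(2)] by (metis le_zero_eq)
        then have "ball x e \<in> null_sets \<nu>2" using assms(2) by (simp add: null_sets_def)
        from AE_not_in[OF this] have "AE z in \<nu>2. f z = 0"
        proof (rule AE_mp, intro AE_I2 impI)
          fix z assume "z \<notin> ball x e"
          then have "dist z x \<ge> e" by (simp add: dist_commute)
          then have "2 - 2 * dist z x / e \<le> 0" using e by (simp add: field_simps)
          then show "f z = 0" by (simp add: f_def)
        qed
        then have "(\<integral>z. f z \<partial>\<nu>2) = (\<integral>z. 0 \<partial>\<nu>2)"
          by (intro integral_cong_AE) (use meas2[OF fm] in auto)
        moreover have "(0::real) < (1/64) ^ length w" by simp
        ultimately show False using pos by simp
      qed
    qed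
  next
    fix x assume x: "x \<in> msupport \<nu>2"
    show "x \<in> Theta2" unfolding Theta2_def
    proof (rule ccontr)
      assume "x \<notin> \<Inter> (range Theta)"
      then obtain m where m: "x \<notin> Theta m" by auto
      have "open (UNIV - Theta m)" by (simp add: open_Diff compact_imp_closed Theta_compact)
      then obtain r where r: "r > 0" "ball x r \<subseteq> UNIV - Theta m" using m open_contains_ball by blast
      define f where "f z = max 0 (r - dist z x)" for z
      have fc: "continuous_on UNIV f" unfolding f_def by (intro continuous_intros)
      have f0: "0 \<le> f z" "f z \<le> r" for z using r by (auto simp: f_def)
      have fb: "bounded (range f)" unfolding bounded_iff using f0 by (intro exI[of _ r]) auto
      have fm: "f \<in> borel_measurable borel" by (rule borel_measurable_continuous_onI[OF fc])
      have lim: "(\<lambda>n. \<integral>z. f z \<partial>((Qstep ^^ n) \<nu>0)) \<longlonglongrightarrow> (\<integral>z. f z \<partial>\<nu>2)"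
        using wc fc fb unfolding weak_conv2_def by blast
      have zero: "(\<integral>z. f z \<partial>((Qstep ^^ n) \<nu>0)) = 0" if n: "n \<ge> m" for n
      proof -
        have "AE z in (Qstep ^^ n) \<nu>0. z \<in> Theta n" using AE_Theta P by blast
        then have "AE z in (Qstep ^^ n) \<nu>0. f z = 0"
        proof (rule AE_mp, intro AE_I2 impI)
          fix z assume "z \<in> Theta n"
          then have "z \<in> Theta m" using Theta_mono[OF n] by blast
          then have "z \<notin> ball x r" using r by blast
          then have "dist z x \<ge> r" by (simp add: dist_commute)
          then show "f z = 0" by (simp add: f_def)
        qed
        then have "(\<integral>z. f z \<partial>((Qstep ^^ n) \<nu>0)) = (\<integral>z. 0 \<partial>((Qstep ^^ n) \<nu>0))"
          by (intro integral_cong_AE) (use measM[OF fm] in auto)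
        then show ?thesis by simp
      qed
      have L0: "(\<integral>z. f z \<partial>\<nu>2) = 0"
      proof (rule antisym)
        show "(\<integral>z. f z \<partial>\<nu>2) \<le> 0" by (rule LIMSEQ_le_const2[OF lim]) (use zero in \<open>intro exI[of _ m]\<close>, auto)
        show "0 \<le> (\<integral>z. f z \<partial>\<nu>2)" by (rule LIMSEQ_le_const[OF lim]) (use zero in \<open>intro exI[of _ m]\<close>, auto)
      qed
      have int: "integrable \<nu>2 f"
        by (rule N.integrable_const_bound[where B=r]) (use f0 meas2[OF fm] in auto)
      have "AE z in \<nu>2. f z = 0" using integral_nonneg_eq_0_iff_AE[OF int] L0 f0 by simp
      then obtain Z where Z: "{z \<in> space \<nu>2. \<not> f z = 0} \<subseteq> Z" "emeasure \<nu>2 Z = 0" "Z \<in> sets \<nu>2"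
        by (rule AE_E)
      have "ball x r \<subseteq> Z"
      proof
        fix z assume "z \<in> ball x r"
        then have "f z \<noteq> 0" by (simp add: f_def dist_commute)
        then show "z \<in> Z" using Z(1) sp2 by blast
      qed
      then have "emeasure \<nu>2 (ball x r) = 0" using Z emeasure_mono by (metis le_zero_eq)
      moreover have "emeasure \<nu>2 (ball x r) > 0" using x r unfolding msupport_def by auto
      ultimately show False by simp
    qed
  qed
qed

end
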